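(* Let $(L,\nu,\tau)$ be a Šerstnev random normed space whose triangle function $\tau$ is sup-continuous and satisfies $$\tau(F,G)(x)\ \ge\ \sup_{t\in[0,1]}\min\{F(tx),G((1-t)x)\}\qquad\text{for all }x\ge0,\ F,G\in D^+ .$$ Then the family $P_{fc}(L)$ of all nonempty closed convex subsets of $L$ is closed in $P_f(L)$ with respect to the probabilistic Pompeiu–Hausdorff metric $H$; hence $P_{fc}(L)$ is complete with respect to $H$ if $L$ is complete. Moreover, if $L$ is complete, the family $P_{kc}(L)$ of all nonempty compact convex subsets of $L$ is complete with respect to $H$.
   Context: $\Delta^+$ is the set of functions $F:[-\infty,\infty]\to[0,1]$ that are nondecreasing, left-continuous on $\mathbb R$, with $F(-\infty)=0$, $F(\infty)=1$, $F(0)=0$; ordered pointwise; $D^+=\{F\in\Delta^+:\lim_{x\to\infty}F(x)=1\}$; $\epsilon_0(x)=0$ for $x\le0$, $=1$ for $x>0$. Infimum of $\{F_i\}$ in $\Delta^+$: $G(x)=\sup_{x'<x}\inf_iF_i(x')$; supremum pointwise. A triangle function is $\tau:\Delta^+\times\Delta^+\to\Delta^+$ commutative, associative, nondecreasing in each argument, with $\tau(F,\epsilon_0)=F$, continuous for weak convergence. A Šerstnev random normed space $(L,\nu,\tau)$: $L$ a real vector space, $\tau$ a continuous triangle function with $\tau(D^+\times D^+)\subset D^+$, $\nu:L\to D^+$ with $\nu(p)=\epsilon_0\iff p=0$; $\nu(ap)(x)=\nu(p)(x/|a|)$ for $x\ge0$, $a\ne0$; $\nu(p+q)\ge\tau(\nu(p),\nu(q))$.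 It is a probabilistic metric space with $F_{pq}=\nu(p-q)$, topologized by the strong topology with neighborhood base $U_t(p)=\{q:F_{pq}(t)>1-t\}$, $t>0$; completeness and compactness refer to it. $\tau$ is sup-continuous if $\tau(\sup_iF_i,G)=\sup_i\tau(F_i,G)$ for every family $\{F_i\}\subset\Delta^+$, $G\in\Delta^+$. For nonempty $A,B\subset L$: $F_{pB}(x)=\sup_{q\in B}F_{pq}(x)$, $\Gamma^*_{AB}(x)=\inf_{p\in A}F_{pB}(x)$, $F^*_{AB}(x)=\sup_{x'<x}\Gamma^*_{AB}(x')$, $H(A,B)=F_{AB}=\min\{F^*_{AB},F^*_{BA}\}$. $P_f(L)$ is the family of nonempty closed subsets; $A_n\to A$ with respect to $H$ iff for every $t>0$, $F_{A_nA}(t)>1-t$ for all large $n$, and Cauchy sequences/completeness for $H$ are defined analogously; a subfamily is closed in $P_f(L)$ if it contains the $H$-limits in $P_f(L)$ of its convergent sequences. *)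

theory Defs
  imports "HOL-Analysis.Analysis"
begin

text \<open>Distribution functions in Delta+ are represented by their restriction to the
  real line (type real => real); the values at -infinity (0) and +infinity (1) are
  fixed by definition and therefore carry no information.\<close>

type_synonym distf = "real \<Rightarrow> real"

definition delta_plus :: "distf \<Rightarrow> bool" where
  "delta_plus F \<longleftrightarrow> (\<forall>x y. x \<le> y \<longrightarrow> F x \<le> F y) \<and> (\<forall>x. 0 \<le> F x \<and> F x \<le> 1)
     \<and> (\<forall>x. continuous (at_left x) F) \<and> F 0 = 0"

definition D_plus :: "distf \<Rightarrow> bool" where
  "D_plus F \<longleftrightarrow> delta_plus F \<and> (F \<longlongrightarrow> 1) at_top"

definition eps0 :: distf where
  "eps0 x = (if x \<le> 0 then 0 else 1)"

definition weak_conv :: "(nat \<Rightarrow> distf) \<Rightarrow> distf \<Rightarrow> bool" where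
  "weak_conv Fs F \<longleftrightarrow> (\<forall>x. isCont F x \<longrightarrow> (\<lambda>n. Fs n x) \<longlonglongrightarrow> F x)"

definition triangle_function :: "(distf \<Rightarrow> distf \<Rightarrow> distf) \<Rightarrow> bool" where
  "triangle_function \<tau> \<longleftrightarrow>
     (\<forall>F G. delta_plus F \<longrightarrow> delta_plus G \<longrightarrow> delta_plus (\<tau> F G)) \<and>
     (\<forall>F G. delta_plus F \<longrightarrow> delta_plus G \<longrightarrow> \<tau> F G = \<tau> G F) \<and>
     (\<forall>F G K. delta_plus F \<longrightarrow> delta_plus G \<longrightarrow> delta_plus K \<longrightarrow> \<tau> (\<tau> F G) K = \<tau> F (\<tau> G K)) \<and>
     (\<forall>F F' G. delta_plus F \<longrightarrow> delta_plus F' \<longrightarrow> delta_plus G \<longrightarrow> (\<forall>x. F x \<le> F' x)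
        \<longrightarrow> (\<forall>x. \<tau> F G x \<le> \<tau> F' G x)) \<and>
     (\<forall>F. delta_plus F \<longrightarrow> \<tau> F eps0 = F)"

text \<open>Continuity of tau with respect to weak convergence (the topology of weak
  convergence on Delta+ is metrizable, so sequential continuity is used).\<close>
definition continuous_tf :: "(distf \<Rightarrow> distf \<Rightarrow> distf) \<Rightarrow> bool" where
  "continuous_tf \<tau> \<longleftrightarrow>
     (\<forall>Fs F Gs G. (\<forall>n. delta_plus (Fs n)) \<longrightarrow> delta_plus F \<longrightarrow> (\<forall>n. delta_plus (Gs n)) \<longrightarrow>
        delta_plus G \<longrightarrow> weak_conv Fs F \<longrightarrow> weak_conv Gs G \<longrightarrow>
        weak_conv (\<lambda>n. \<tau> (Fs n) (Gs n)) (\<tau> F G))"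

text \<open>Sup-continuity; the supremum of a (nonempty) family in Delta+ is pointwise.
  (For the empty family the condition holds automatically by monotonicity.)\<close>
definition sup_continuous_tf :: "(distf \<Rightarrow> distf \<Rightarrow> distf) \<Rightarrow> bool" where
  "sup_continuous_tf \<tau> \<longleftrightarrow>
     (\<forall>S G. S \<noteq> {} \<longrightarrow> (\<forall>F\<in>S. delta_plus F) \<longrightarrow> delta_plus G \<longrightarrow>
        \<tau> (\<lambda>x. SUP F\<in>S. F x) G = (\<lambda>x. SUP F\<in>S. \<tau> F G x))"

definition serstnev_RN_space :: "('a::real_vector \<Rightarrow> distf) \<Rightarrow> (distf \<Rightarrow> distf \<Rightarrow> distf) \<Rightarrow> bool" where
  "serstnev_RN_space \<nu> \<tau> \<longleftrightarrow>
     triangle_function \<tau> \<and> continuous_tf \<tau> \<and>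
     (\<forall>F G. D_plus F \<longrightarrow> D_plus G \<longrightarrow> D_plus (\<tau> F G)) \<and>
     (\<forall>p. D_plus (\<nu> p)) \<and>
     (\<forall>p. \<nu> p = eps0 \<longleftrightarrow> p = 0) \<and>
     (\<forall>p a x. a \<noteq> 0 \<longrightarrow> x \<ge> 0 \<longrightarrow> \<nu> (a *\<^sub>R p) x = \<nu> p (x / \<bar>a\<bar>)) \<and>
     (\<forall>p q x. \<tau> (\<nu> p) (\<nu> q) x \<le> \<nu> (p + q) x)"

text \<open>Strong topology: neighbourhood base U_t(p) = {q. F_pq(t) > 1 - t}, F_pq = nu(p - q).\<close>
definition U_nbhd :: "('a::real_vector \<Rightarrow> distf) \<Rightarrow> real \<Rightarrow> 'a \<Rightarrow> 'a set" where
  "U_nbhd \<nu> t p = {q. \<nu> (p - q) t > 1 - t}"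

definition s_open :: "('a::real_vector \<Rightarrow> distf) \<Rightarrow> 'a set \<Rightarrow> bool" where
  "s_open \<nu> V \<longleftrightarrow> (\<forall>p\<in>V. \<exists>t>0. U_nbhd \<nu> t p \<subseteq> V)"

definition s_closed :: "('a::real_vector \<Rightarrow> distf) \<Rightarrow> 'a set \<Rightarrow> bool" where
  "s_closed \<nu> A \<longleftrightarrow> s_open \<nu> (- A)"

definition s_compact :: "('a::real_vector \<Rightarrow> distf) \<Rightarrow> 'a set \<Rightarrow> bool" where
  "s_compact \<nu> K \<longleftrightarrow> (\<forall>\<C>. (\<forall>V\<in>\<C>. s_open \<nu> V) \<longrightarrow> K \<subseteq> \<Union>\<C> \<longrightarrow>
      (\<exists>\<D>\<subseteq>\<C>. finite \<D> \<and> K \<subseteq> \<Union>\<D>))"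

definition s_cauchy :: "('a::real_vector \<Rightarrow> distf) \<Rightarrow> (nat \<Rightarrow> 'a) \<Rightarrow> bool" where
  "s_cauchy \<nu> p \<longleftrightarrow> (\<forall>t>0. \<exists>N. \<forall>m\<ge>N. \<forall>n\<ge>N. \<nu> (p m - p n) t > 1 - t)"

definition s_converges :: "('a::real_vector \<Rightarrow> distf) \<Rightarrow> (nat \<Rightarrow> 'a) \<Rightarrow> 'a \<Rightarrow> bool" where
  "s_converges \<nu> p l \<longleftrightarrow> (\<forall>t>0. \<exists>N. \<forall>n\<ge>N. \<nu> (p n - l) t > 1 - t)"

definition s_complete :: "('a::real_vector \<Rightarrow> distf) \<Rightarrow> bool" where
  "s_complete \<nu> \<longleftrightarrow> (\<forall>p. s_cauchy \<nu> p \<longrightarrow> (\<exists>l. s_converges \<nu> p l))"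

definition F_pt_set :: "('a::real_vector \<Rightarrow> distf) \<Rightarrow> 'a \<Rightarrow> 'a set \<Rightarrow> distf" where
  "F_pt_set \<nu> p B = (\<lambda>x. SUP q\<in>B. \<nu> (p - q) x)"

definition Gamma_star :: "('a::real_vector \<Rightarrow> distf) \<Rightarrow> 'a set \<Rightarrow> 'a set \<Rightarrow> distf" where
  "Gamma_star \<nu> A B = (\<lambda>x. INF p\<in>A. F_pt_set \<nu> p B x)"

definition F_star :: "('a::real_vector \<Rightarrow> distf) \<Rightarrow> 'a set \<Rightarrow> 'a set \<Rightarrow> distf" where
  "F_star \<nu> A B = (\<lambda>x. SUP x'\<in>{..<x}. Gamma_star \<nu> A B x')"

definition H_metric :: "('a::real_vector \<Rightarrow> distf) \<Rightarrow> 'a set \<Rightarrow> 'a set \<Rightarrow> distf" where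
  "H_metric \<nu> A B = (\<lambda>x. min (F_star \<nu> A B x) (F_star \<nu> B A x))"

definition P_f :: "('a::real_vector \<Rightarrow> distf) \<Rightarrow> 'a set set" where
  "P_f \<nu> = {A. A \<noteq> {} \<and> s_closed \<nu> A}"

definition P_fc :: "('a::real_vector \<Rightarrow> distf) \<Rightarrow> 'a set set" where
  "P_fc \<nu> = {A. A \<noteq> {} \<and> s_closed \<nu> A \<and> convex A}"

definition P_kc :: "('a::real_vector \<Rightarrow> distf) \<Rightarrow> 'a set set" where
  "P_kc \<nu> = {A. A \<noteq> {} \<and> s_compact \<nu> A \<and> convex A}"

definition H_converges :: "('a::real_vector \<Rightarrow> distf) \<Rightarrow> (nat \<Rightarrow> 'a set) \<Rightarrow> 'a set \<Rightarrow> bool" where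
  "H_converges \<nu> As A \<longleftrightarrow> (\<forall>t>0. \<exists>N. \<forall>n\<ge>N. H_metric \<nu> (As n) A t > 1 - t)"

definition H_cauchy :: "('a::real_vector \<Rightarrow> distf) \<Rightarrow> (nat \<Rightarrow> 'a set) \<Rightarrow> bool" where
  "H_cauchy \<nu> As \<longleftrightarrow> (\<forall>t>0. \<exists>N. \<forall>m\<ge>N. \<forall>n\<ge>N. H_metric \<nu> (As m) (As n) t > 1 - t)"

definition H_closed_in_P_f :: "('a::real_vector \<Rightarrow> distf) \<Rightarrow> 'a set set \<Rightarrow> bool" where
  "H_closed_in_P_f \<nu> \<A> \<longleftrightarrow>
     (\<forall>As A. (\<forall>n. As n \<in> \<A>) \<longrightarrow> A \<in> P_f \<nu> \<longrightarrow> H_converges \<nu> As A \<longrightarrow> A \<in> \<A>)"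

definition H_complete :: "('a::real_vector \<Rightarrow> distf) \<Rightarrow> 'a set set \<Rightarrow> bool" where
  "H_complete \<nu> \<A> \<longleftrightarrow>
     (\<forall>As. (\<forall>n. As n \<in> \<A>) \<longrightarrow> H_cauchy \<nu> As \<longrightarrow> (\<exists>A\<in>\<A>. H_converges \<nu> As A))"

end

theory Submission
  imports Defs
begin


definition near :: "('a::real_vector \<Rightarrow> distf) \<Rightarrow> 'a \<Rightarrow> 'a \<Rightarrow> real \<Rightarrow> bool" where
  "near \<nu> p q s \<longleftrightarrow> \<nu> (p - q) s > 1 - s"

definition dd :: "('a::real_vector \<Rightarrow> distf) \<Rightarrow> 'a \<Rightarrow> 'a \<Rightarrow> real" where
  "dd \<nu> p q = Inf {s. near \<nu> p q s}"

locale srn =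
  fixes \<nu> :: "'a::real_vector \<Rightarrow> distf" and \<tau> :: "distf \<Rightarrow> distf \<Rightarrow> distf"
  assumes S: "serstnev_RN_space \<nu> \<tau>"
    and T: "\<And>F G x t. D_plus F \<Longrightarrow> D_plus G \<Longrightarrow> x \<ge> 0 \<Longrightarrow> t \<in> {0..1} \<Longrightarrow>
           min (F (t * x)) (G ((1 - t) * x)) \<le> \<tau> F G x"
begin

lemma Dp: "D_plus (\<nu> p)" using S unfolding serstnev_RN_space_def by blast
lemma dp: "delta_plus (\<nu> p)" using Dp unfolding D_plus_def by blast
lemma nu_mono: "x \<le> y \<Longrightarrow> \<nu> p x \<le> \<nu> p y" using dp unfolding delta_plus_def by blast
lemma nu_ge0: "0 \<le> \<nu> p x" using dp unfolding delta_plus_def by blast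
lemma nu_le1: "\<nu> p x \<le> 1" using dp unfolding delta_plus_def by blast
lemma nu_at0: "\<nu> p 0 = 0" using dp unfolding delta_plus_def by blast
lemma nu_nonpos: "x \<le> 0 \<Longrightarrow> \<nu> p x = 0"
  using nu_mono[of x 0 p] nu_ge0[of p x] nu_at0[of p] by linarith
lemma nu_zero: "\<nu> 0 = eps0" using S unfolding serstnev_RN_space_def by blast
lemma nu_eq0: "\<nu> p = eps0 \<Longrightarrow> p = 0" using S unfolding serstnev_RN_space_def by blast
lemma nu_scale: "a \<noteq> 0 \<Longrightarrow> x \<ge> 0 \<Longrightarrow> \<nu> (a *\<^sub>R p) x = \<nu> p (x / \<bar>a\<bar>)"
  using S unfolding serstnev_RN_space_def by blast
lemma nu_tau: "\<tau> (\<nu> p) (\<nu> q) x \<le> \<nu> (p + q) x"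
  using S unfolding serstnev_RN_space_def by blast

lemma nu_minus: "\<nu> (- p) x = \<nu> p x"
proof (cases "x \<ge> 0")
  case True
  then show ?thesis using nu_scale[of "-1" x p] by simp
next
  case False
  then show ?thesis using nu_nonpos[of x] by simp
qed

lemma nu_tri: assumes "s > 0" "u > 0"
  shows "min (\<nu> a s) (\<nu> b u) \<le> \<nu> (a + b) (s + u)"
proof -
  have "min (\<nu> a ((s/(s+u)) * (s+u))) (\<nu> b ((1 - s/(s+u)) * (s+u))) \<le> \<tau> (\<nu> a) (\<nu> b) (s+u)"
    using assms by (intro T Dp) auto
  moreover have "(s/(s+u)) * (s+u) = s" "(1 - s/(s+u)) * (s+u) = u" using assms
    by (auto simp: field_simps)
  ultimately show ?thesis using nu_tau[of a b "s+u"] by simp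
qed

lemma nu_scale_pos: "u > 0 \<Longrightarrow> x \<ge> 0 \<Longrightarrow> \<nu> (u *\<^sub>R a) (u * x) = \<nu> a x"
  using nu_scale[of u "u*x" a] by simp

lemma near_pos: "near \<nu> p q s \<Longrightarrow> s > 0"
  unfolding near_def using nu_nonpos[of s "p - q"] by force

lemma near_mono: "near \<nu> p q s \<Longrightarrow> s \<le> s' \<Longrightarrow> near \<nu> p q s'"
  unfolding near_def using nu_mono[of s s' "p - q"] by linarith

lemma near_sym: "near \<nu> p q s = near \<nu> q p s"
  unfolding near_def using nu_minus[of "q - p" s] by simp

lemma near_tri: assumes "near \<nu> p q s" "near \<nu> q r u" shows "near \<nu> p r (s + u)"
proof -
  have "s > 0" "u > 0" using assms near_pos by auto
  then have "min (\<nu> (p - q) s) (\<nu> (q - r) u) \<le> \<nu> (p - r) (s + u)"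
    using nu_tri[of s u "p - q" "q - r"] by simp
  then show ?thesis using assms \<open>s>0\<close> \<open>u>0\<close> unfolding near_def by linarith
qed

lemma near_refl: "s > 0 \<Longrightarrow> near \<nu> p p s"
  unfolding near_def by (simp add: nu_zero eps0_def)

lemma near_2: "near \<nu> p q 2"
  unfolding near_def using nu_ge0[of "p - q" 2] by simp

lemma near_conv:
  assumes "near \<nu> p p' s" "near \<nu> q q' s" "u > 0" "v > 0" "u + v = 1"
  shows "near \<nu> (u *\<^sub>R p + v *\<^sub>R q) (u *\<^sub>R p' + v *\<^sub>R q') s"
proof -
  have s: "s > 0" using assms near_pos by auto
  have e: "u *\<^sub>R p + v *\<^sub>R q - (u *\<^sub>R p' + v *\<^sub>R q') = u *\<^sub>R (p - p') + v *\<^sub>R (q - q')"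
    by (simp add: algebra_simps)
  have "min (\<nu> (u *\<^sub>R (p - p')) (u * s)) (\<nu> (v *\<^sub>R (q - q')) ((1 - u) * s))
        \<le> \<tau> (\<nu> (u *\<^sub>R (p - p'))) (\<nu> (v *\<^sub>R (q - q'))) s"
    using assms s by (intro T Dp) auto
  moreover have "1 - u = v" using assms by simp
  ultimately have "min (\<nu> (p - p') s) (\<nu> (q - q') s) \<le> \<nu> (u *\<^sub>R (p - p') + v *\<^sub>R (q - q')) s"
    using nu_tau[of "u *\<^sub>R (p - p')" "v *\<^sub>R (q - q')" s] nu_scale_pos[of u s "p - p'"]
      nu_scale_pos[of v s "q - q'"] assms s by simp
  then show ?thesis using assms unfolding near_def e by linarith
qed

lemma near_set: "{s. near \<nu> p q s} \<noteq> {}" "bdd_below {s. near \<nu> p q s}"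
  using near_2 near_pos by (auto intro!: bdd_belowI[of _ 0] less_imp_le)

lemma dd_nonneg: "0 \<le> dd \<nu> p q"
  unfolding dd_def using near_set near_pos by (intro cInf_greatest) (auto intro: less_imp_le)

lemma dd_le: "near \<nu> p q s \<Longrightarrow> dd \<nu> p q \<le> s"
  unfolding dd_def using near_set by (intro cInf_lower) auto

lemma dd_less: assumes "dd \<nu> p q < s" shows "near \<nu> p q s"
proof -
  obtain s' where "near \<nu> p q s'" "s' < s"
    using cInf_lessD[OF near_set(1) assms[unfolded dd_def]] by auto
  then show ?thesis using near_mono by auto
qed

lemma dd_commute: "dd \<nu> p q = dd \<nu> q p"
proof -
  have "{s. near \<nu> p q s} = {s. near \<nu> q p s}" using near_sym by auto
  then show ?thesis unfolding dd_def by simp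
qed

lemma dd_tri: "dd \<nu> p r \<le> dd \<nu> p q + dd \<nu> q r"
proof (rule field_le_epsilon)
  fix e :: real assume e: "e > 0"
  have "near \<nu> p q (dd \<nu> p q + e/2)" "near \<nu> q r (dd \<nu> q r + e/2)"
    using e by (auto intro!: dd_less)
  from near_tri[OF this] show "dd \<nu> p r \<le> dd \<nu> p q + dd \<nu> q r + e"
    by (intro order.trans[OF dd_le]) auto
qed

lemma dd_zero: "dd \<nu> p q = 0 \<longleftrightarrow> p = q"
proof
  assume "p = q"
  then show "dd \<nu> p q = 0"
    using dd_nonneg[of p q] near_refl dd_le
    by (metis field_le_epsilon add_0 order_antisym)
next
  assume d0: "dd \<nu> p q = 0"
  have nr: "near \<nu> p q s" if "s > 0" for s using d0 that dd_less by simp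
  have "\<nu> (p - q) = eps0"
  proof
    fix x show "\<nu> (p - q) x = eps0 x"
    proof (cases "x \<le> 0")
      case True then show ?thesis using nu_nonpos by (simp add: eps0_def)
    next
      case False
      show ?thesis
      proof (rule ccontr)
        assume "\<nu> (p - q) x \<noteq> eps0 x"
        then have lt: "\<nu> (p - q) x < 1" using False nu_le1[of "p-q" x] by (simp add: eps0_def)
        define s where "s = min x ((1 - \<nu> (p - q) x)/2)"
        have "s > 0" using False lt by (simp add: s_def)
        then have "\<nu> (p - q) s > 1 - s" using nr unfolding near_def by blast
        moreover have "\<nu> (p - q) s \<le> \<nu> (p - q) x" by (rule nu_mono) (simp add: s_def)
        moreover have "s \<le> (1 - \<nu> (p - q) x)/2" unfolding s_def by (rule min.cobounded2)
        ultimately have "1 - s < \<nu> (p - q) x" "s \<le> (1 - \<nu> (p - q) x)/2" by linarith+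
        then show False using lt by (simp add: field_simps)
      qed
    qed
  qed
  then show "p = q" using nu_eq0[of "p - q"] by simp
qed

sublocale M: Metric_space UNIV "dd \<nu>"
  by unfold_locales (auto simp: dd_nonneg dd_commute dd_zero dd_tri)

end


definition hdist :: "('a::real_vector \<Rightarrow> distf) \<Rightarrow> 'a set \<Rightarrow> 'a set \<Rightarrow> real \<Rightarrow> bool" where
  "hdist \<nu> A B e \<longleftrightarrow> (\<forall>p\<in>A. \<exists>q\<in>B. dd \<nu> p q \<le> e) \<and> (\<forall>q\<in>B. \<exists>p\<in>A. dd \<nu> p q \<le> e)"

context srn begin

lemma U_eq: "U_nbhd \<nu> t p = {q. near \<nu> p q t}"
  unfolding U_nbhd_def near_def by simp

lemma s_open_iff: "s_open \<nu> V \<longleftrightarrow> openin M.mtopology V"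
  unfolding s_open_def M.openin_mtopology U_eq
proof safe
  fix x assume H: "\<forall>p\<in>V. \<exists>t>0. {q. near \<nu> p q t} \<subseteq> V" and x: "x \<in> V"
  then obtain t where t: "t > 0" "{q. near \<nu> x q t} \<subseteq> V" by blast
  have "M.mball x t \<subseteq> V" using t dd_less by auto
  then show "\<exists>r>0. M.mball x r \<subseteq> V" using t by blast
next
  fix p assume H: "\<forall>x. x \<in> V \<longrightarrow> (\<exists>r>0. M.mball x r \<subseteq> V)" and p: "p \<in> V"
  then obtain r where r: "r > 0" "M.mball p r \<subseteq> V" by blast
  have "{q. near \<nu> p q (r/2)} \<subseteq> V"
  proof
    fix q assume "q \<in> {q. near \<nu> p q (r/2)}"
    then have "dd \<nu> p q \<le> r/2" by (intro dd_le) simp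
    then show "q \<in> V" using r by auto
  qed
  then show "\<exists>t>0. {q. near \<nu> p q t} \<subseteq> V" using r by (intro exI[of _ "r/2"]) auto
qed simp

lemma s_closed_iff: "s_closed \<nu> A \<longleftrightarrow> closedin M.mtopology A"
  unfolding s_closed_def closedin_def s_open_iff by (simp add: Compl_eq_Diff_UNIV)

lemma s_compact_iff: "s_compact \<nu> K \<longleftrightarrow> compactin M.mtopology K"
proof
  assume H: "s_compact \<nu> K"
  show "compactin M.mtopology K" unfolding compactin_def
  proof (intro conjI allI impI)
    show "K \<subseteq> topspace M.mtopology" by simp
    fix U assume U: "(\<forall>U\<in>U. openin M.mtopology U) \<and> K \<subseteq> \<Union>U"
    obtain D where "D \<subseteq> U" "finite D" "K \<subseteq> \<Union>D"
      using H[unfolded s_compact_def s_open_iff, rule_format, of U] U by auto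
    then show "\<exists>F. finite F \<and> F \<subseteq> U \<and> K \<subseteq> \<Union>F" by blast
  qed
next
  assume H: "compactin M.mtopology K"
  show "s_compact \<nu> K" unfolding s_compact_def s_open_iff
  proof (intro allI impI)
    fix C assume "\<forall>V\<in>C. openin M.mtopology V" "K \<subseteq> \<Union>C"
    then obtain F where "finite F" "F \<subseteq> C" "K \<subseteq> \<Union>F"
      using H[unfolded compactin_def] by meson
    then show "\<exists>D\<subseteq>C. finite D \<and> K \<subseteq> \<Union>D" by blast
  qed
qed

lemma mcomplete_of_s: assumes "s_complete \<nu>" shows "M.mcomplete"
  unfolding M.mcomplete_def
proof safe
  fix \<sigma> assume "M.MCauchy \<sigma>"
  then have "s_cauchy \<nu> \<sigma>" unfolding M.MCauchy_def s_cauchy_def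
    using dd_less unfolding near_def by metis
  then obtain l where l: "s_converges \<nu> \<sigma> l" using assms s_complete_def by blast
  show "\<exists>x. limitin M.mtopology \<sigma> x sequentially"
    unfolding M.limit_metric_sequentially
  proof (intro exI[of _ l] conjI allI impI)
    fix e :: real assume e: "e > 0"
    then obtain N where "\<forall>n\<ge>N. near \<nu> (\<sigma> n) l (e/2)"
      using l unfolding s_converges_def near_def by (meson half_gt_zero)
    then have "\<forall>n\<ge>N. dd \<nu> (\<sigma> n) l \<le> e/2" using dd_le by blast
    then show "\<exists>N. \<forall>n\<ge>N. \<sigma> n \<in> UNIV \<and> dd \<nu> (\<sigma> n) l < e"
      using e by (intro exI[of _ N]) force
  qed simp
qed

lemma closed_approx:
  assumes "s_closed \<nu> A" "\<And>e. e > 0 \<Longrightarrow> \<exists>a\<in>A. dd \<nu> r a < e"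
  shows "r \<in> A"
proof (rule ccontr)
  assume "r \<notin> A"
  then obtain t where t: "t > 0" "U_nbhd \<nu> t r \<subseteq> - A"
    using assms(1) unfolding s_closed_def s_open_def by blast
  obtain a where "a \<in> A" "dd \<nu> r a < t" using assms(2) t by blast
  then show False using t dd_less unfolding U_eq by blast
qed

lemma Fpt_bounds: assumes "B \<noteq> {}"
  shows "0 \<le> F_pt_set \<nu> p B x" "F_pt_set \<nu> p B x \<le> 1" "bdd_above ((\<lambda>q. \<nu> (p - q) x) ` B)"
proof -
  show bd: "bdd_above ((\<lambda>q. \<nu> (p - q) x) ` B)" using nu_le1 by (intro bdd_aboveI2) blast
  obtain q where "q \<in> B" using assms by blast
  then show "0 \<le> F_pt_set \<nu> p B x" unfolding F_pt_set_def
    using nu_ge0 by (intro cSUP_upper2[OF bd]) auto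
  show "F_pt_set \<nu> p B x \<le> 1" unfolding F_pt_set_def
    using nu_le1 assms by (intro cSUP_least) auto
qed

lemma Gamma_bounds: assumes "A \<noteq> {}" "B \<noteq> {}"
  shows "0 \<le> Gamma_star \<nu> A B x" "Gamma_star \<nu> A B x \<le> 1"
    "bdd_below ((\<lambda>p. F_pt_set \<nu> p B x) ` A)"
proof -
  show bd: "bdd_below ((\<lambda>p. F_pt_set \<nu> p B x) ` A)"
    using Fpt_bounds[OF assms(2)] by (intro bdd_belowI2) blast
  obtain p where "p \<in> A" using assms by blast
  then show "Gamma_star \<nu> A B x \<le> 1" unfolding Gamma_star_def
    using Fpt_bounds[OF assms(2)] by (intro cINF_lower2[OF bd]) auto
  show "0 \<le> Gamma_star \<nu> A B x" unfolding Gamma_star_def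
    using Fpt_bounds[OF assms(2)] assms by (intro cINF_greatest) auto
qed

lemma Fstar_gt:
  assumes "A \<noteq> {}" "B \<noteq> {}" "F_star \<nu> A B t > 1 - t"
  shows "\<forall>p\<in>A. \<exists>q\<in>B. dd \<nu> p q \<le> t"
proof
  fix p assume p: "p \<in> A"
  have bd: "bdd_above ((\<lambda>x. Gamma_star \<nu> A B x) ` {..<t})"
    using Gamma_bounds[OF assms(1,2)] by (intro bdd_aboveI2) blast
  have ne: "{..<t} \<noteq> {}" by (simp add: lessThan_empty_iff)
  obtain x' where x': "x' < t" "Gamma_star \<nu> A B x' > 1 - t"
    using assms(3) unfolding F_star_def less_cSUP_iff[OF ne bd] by auto
  have "Gamma_star \<nu> A B x' \<le> F_pt_set \<nu> p B x'"
    unfolding Gamma_star_def using p Gamma_bounds(3)[OF assms(1,2)] by (intro cINF_lower) auto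
  then have "1 - t < (SUP q\<in>B. \<nu> (p - q) x')" using x' unfolding F_pt_set_def by simp
  then obtain q where q: "q \<in> B" "1 - t < \<nu> (p - q) x'"
    using less_cSUP_iff[OF assms(2) Fpt_bounds(3)[OF assms(2)]] by blast
  have "\<nu> (p - q) x' \<le> \<nu> (p - q) t" using x' by (intro nu_mono) simp
  then have "near \<nu> p q t" using q unfolding near_def by simp
  then show "\<exists>q\<in>B. dd \<nu> p q \<le> t" using q dd_le by blast
qed

lemma Fstar_ge:
  assumes "A \<noteq> {}" "B \<noteq> {}" "s < t" "\<forall>p\<in>A. \<exists>q\<in>B. dd \<nu> p q \<le> s"
  shows "F_star \<nu> A B t > 1 - t"
proof -
  define s' where "s' = (s + t) / 2"
  have s': "s < s'" "s' < t" using assms(3) by (auto simp: s'_def)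
  have "1 - s' \<le> Gamma_star \<nu> A B s'"
    unfolding Gamma_star_def
  proof (rule cINF_greatest[OF assms(1)])
    fix p assume "p \<in> A"
    then obtain q where q: "q \<in> B" "dd \<nu> p q \<le> s" using assms(4) by blast
    then have "near \<nu> p q s'" using s' by (intro dd_less) simp
    then have "1 - s' < \<nu> (p - q) s'" unfolding near_def .
    also have "\<nu> (p - q) s' \<le> F_pt_set \<nu> p B s'"
      unfolding F_pt_set_def using q Fpt_bounds(3)[OF assms(2)] by (intro cSUP_upper) auto
    finally show "1 - s' \<le> F_pt_set \<nu> p B s'" by simp
  qed
  also have "Gamma_star \<nu> A B s' \<le> F_star \<nu> A B t"
    unfolding F_star_def using s' Gamma_bounds[OF assms(1,2)]
    by (intro cSUP_upper) (auto intro!: bdd_aboveI2)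
  finally show ?thesis using s' by simp
qed

lemma H_gt_hd: assumes "A \<noteq> {}" "B \<noteq> {}" "H_metric \<nu> A B t > 1 - t"
  shows "hdist \<nu> A B t"
proof -
  have "F_star \<nu> A B t > 1 - t" "F_star \<nu> B A t > 1 - t"
    using assms(3) unfolding H_metric_def by auto
  from Fstar_gt[OF assms(1,2) this(1)] Fstar_gt[OF assms(2,1) this(2)]
  show ?thesis unfolding hdist_def using dd_commute by metis
qed

lemma hd_H_gt: assumes "A \<noteq> {}" "B \<noteq> {}" "hdist \<nu> A B s" "s < t"
  shows "H_metric \<nu> A B t > 1 - t"
proof -
  have "\<forall>q\<in>B. \<exists>p\<in>A. dd \<nu> q p \<le> s" using assms(3) dd_commute unfolding hdist_def by metis
  then have "F_star \<nu> A B t > 1 - t" "F_star \<nu> B A t > 1 - t"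
    using Fstar_ge[OF assms(1,2,4)] Fstar_ge[OF assms(2,1,4)] assms(3) unfolding hdist_def by auto
  then show ?thesis unfolding H_metric_def by simp
qed

lemma hd_mono: "hdist \<nu> A B s \<Longrightarrow> s \<le> t \<Longrightarrow> hdist \<nu> A B t"
  unfolding hdist_def by (meson order_trans)

end


context srn begin

lemma conv_limit:
  assumes As: "\<forall>n. As n \<in> P_fc \<nu>" and A: "A \<in> P_f \<nu>" and conv: "H_converges \<nu> As A"
  shows "convex A"
proof -
  have neA: "A \<noteq> {}" and clA: "s_closed \<nu> A" using A by (auto simp: P_f_def)
  have neAs: "As n \<noteq> {}" and cvAs: "convex (As n)" for n using As by (auto simp: P_fc_def)
  have hdc: "\<exists>N. hdist \<nu> (As N) A e" if e0: "e > 0" for e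
  proof -
    obtain N where "\<forall>n\<ge>N. H_metric \<nu> (As n) A e > 1 - e" using conv e0 unfolding H_converges_def by blast
    then show ?thesis using H_gt_hd[OF neAs neA] by blast
  qed
  show ?thesis unfolding convex_def
  proof (intro ballI allI impI)
    fix x y and u v :: real
    assume x: "x \<in> A" and y: "y \<in> A" and u: "0 \<le> u" and v: "0 \<le> v" and uv: "u + v = 1"
    show "u *\<^sub>R x + v *\<^sub>R y \<in> A"
    proof (cases "u = 0 \<or> v = 0")
      case True
      then show ?thesis using x y uv by auto
    next
      case False
      then have u': "u > 0" and v': "v > 0" using u v by auto
      show ?thesis
      proof (rule closed_approx[OF clA])
        fix e :: real assume e: "e > 0"
        obtain N where N: "hdist \<nu> (As N) A (e/3)" using hdc e by (meson zero_less_divide_iff zero_less_numeral)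
        obtain x' where x': "x' \<in> As N" "dd \<nu> x' x \<le> e/3" using N x unfolding hdist_def by blast
        obtain y' where y': "y' \<in> As N" "dd \<nu> y' y \<le> e/3" using N y unfolding hdist_def by blast
        have r': "u *\<^sub>R x' + v *\<^sub>R y' \<in> As N" using cvAs x' y' u v uv unfolding convex_def by blast
        have "near \<nu> x x' (e/2)" "near \<nu> y y' (e/2)"
          using x' y' e dd_commute by (auto intro!: dd_less)
        from near_conv[OF this u' v' uv]
        have d1: "dd \<nu> (u *\<^sub>R x + v *\<^sub>R y) (u *\<^sub>R x' + v *\<^sub>R y') \<le> e/2" by (rule dd_le)
        obtain a where a: "a \<in> A" "dd \<nu> (u *\<^sub>R x' + v *\<^sub>R y') a \<le> e/3" using N r' unfolding hdist_def by blast
        have "dd \<nu> (u *\<^sub>R x + v *\<^sub>R y) a \<le> e/2 + e/3"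
          using dd_tri[of "u *\<^sub>R x + v *\<^sub>R y" a "u *\<^sub>R x' + v *\<^sub>R y'"] d1 a by linarith
        then show "\<exists>a\<in>A. dd \<nu> (u *\<^sub>R x + v *\<^sub>R y) a < e" using a e by (intro bexI[of _ a]) auto
      qed
    qed
  qed
qed


lemma limit_exists:
  assumes ne: "\<forall>n. As n \<noteq> {}" and cau: "H_cauchy \<nu> As" and comp: "s_complete \<nu>"
  shows "\<exists>A. A \<noteq> {} \<and> s_closed \<nu> A \<and> H_converges \<nu> As A"
proof -
  have C: "\<exists>N. \<forall>m\<ge>N. \<forall>n\<ge>N. hdist \<nu> (As m) (As n) e" if e0: "e > 0" for e
  proof -
    obtain N where "\<forall>m\<ge>N. \<forall>n\<ge>N. H_metric \<nu> (As m) (As n) e > 1 - e"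
      using cau e0 unfolding H_cauchy_def by blast
    then have "\<forall>m\<ge>N. \<forall>n\<ge>N. hdist \<nu> (As m) (As n) e"
      using H_gt_hd[OF ne[rule_format] ne[rule_format]] by blast
    then show ?thesis by blast
  qed
  define A where "A = {x. \<forall>e>0. \<forall>N. \<exists>n\<ge>N. \<exists>y\<in>As n. dd \<nu> x y < e}"
  have clA: "s_closed \<nu> A"
    unfolding s_closed_def s_open_def U_eq
  proof
    fix p assume "p \<in> - A"
    then obtain e N where e: "e > 0" and eN: "\<forall>n\<ge>N. \<forall>y\<in>As n. \<not> dd \<nu> p y < e"
      unfolding A_def by auto
    have "{q. near \<nu> p q (e/2)} \<subseteq> - A"
    proof
      fix q assume q: "q \<in> {q. near \<nu> p q (e/2)}"
      then have dq: "dd \<nu> p q \<le> e/2" using dd_le by blast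
      show "q \<in> - A"
      proof
        assume qA: "q \<in> A"
        have "e/2 > 0" using e by simp
        then obtain n y where "n \<ge> N" "y \<in> As n" "dd \<nu> q y < e/2"
          using qA unfolding A_def by blast
        moreover have "dd \<nu> p y \<le> dd \<nu> p q + dd \<nu> q y" by (rule dd_tri)
        ultimately have "dd \<nu> p y < e" using dq by linarith
        then show False using eN \<open>n \<ge> N\<close> \<open>y \<in> As n\<close> by blast
      qed
    qed
    then show "\<exists>t>0. {q. near \<nu> p q t} \<subseteq> - A" using e by (intro exI[of _ "e/2"]) auto
  qed
  have inc: "\<exists>N. \<forall>n\<ge>N. \<forall>x\<in>A. \<exists>z\<in>As n. dd \<nu> z x \<le> 2 * e" if e0: "e > 0" for e
  proof -
    obtain N where N: "\<forall>m\<ge>N. \<forall>n\<ge>N. hdist \<nu> (As m) (As n) e" using C e0 by blast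
    have "\<exists>z\<in>As n. dd \<nu> z x \<le> 2 * e" if n: "n \<ge> N" and x: "x \<in> A" for n x
    proof -
      obtain m y where m: "m \<ge> N" "y \<in> As m" "dd \<nu> x y < e" using x e0 unfolding A_def by blast
      obtain z where z: "z \<in> As n" "dd \<nu> y z \<le> e" using N m n unfolding hdist_def by blast
      have "dd \<nu> z x \<le> dd \<nu> z y + dd \<nu> y x" by (rule dd_tri)
      then have "dd \<nu> z x \<le> 2 * e" using m z dd_commute[of z y] dd_commute[of y x] by linarith
      then show ?thesis using z by blast
    qed
    then show ?thesis by blast
  qed
  have outc: "\<exists>N. \<forall>n\<ge>N. \<forall>y\<in>As n. \<exists>l\<in>A. dd \<nu> y l \<le> 2 * e" if e0: "e > 0" for e
  proof -
    have "\<forall>k. \<exists>N. \<forall>m\<ge>N. \<forall>n\<ge>N. hdist \<nu> (As m) (As n) (e / 2^k)"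
    proof
      fix k :: nat
      have "e / 2^k > 0" using e0 by simp
      then show "\<exists>N. \<forall>m\<ge>N. \<forall>n\<ge>N. hdist \<nu> (As m) (As n) (e / 2^k)" by (rule C)
    qed
    from choice[OF this] obtain Nf where Nf0: "\<forall>k. \<forall>m\<ge>Nf k. \<forall>n\<ge>Nf k. hdist \<nu> (As m) (As n) (e / 2^k)"
      by blast
    have Nf: "hdist \<nu> (As m) (As n) (e / 2^k)" if "m \<ge> Nf k" "n \<ge> Nf k" for k m n
      using Nf0 that by blast
    define Ng where "Ng k = k + (\<Sum>j\<le>k. Nf j)" for k
    have Ng1: "Nf j \<le> Ng k" if "j \<le> k" for j k
    proof -
      have "Nf j \<le> (\<Sum>j\<le>k. Nf j)" using that by (intro member_le_sum) auto
      then show ?thesis unfolding Ng_def by simp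
    qed
    have Ng2: "k \<le> Ng k" for k unfolding Ng_def by simp
    have "\<forall>y\<in>As n. \<exists>l\<in>A. dd \<nu> y l \<le> 2 * e" if n: "n \<ge> Nf 0" for n
    proof
      fix y assume y: "y \<in> As n"
      define idx where "idx k = max n (Ng k)" for k
      have idx0: "idx 0 = n" using n unfolding idx_def Ng_def by simp
      have step: "\<exists>q\<in>As (idx (Suc k)). dd \<nu> p q \<le> e / 2^k" if "p \<in> As (idx k)" for p k
      proof -
        have "hdist \<nu> (As (idx k)) (As (idx (Suc k))) (e / 2^k)"
          using Ng1[of k k] Ng1[of k "Suc k"] unfolding idx_def by (intro Nf) auto
        then show ?thesis using that unfolding hdist_def by blast
      qed
      define x where "x = rec_nat y (\<lambda>k xk. SOME q. q \<in> As (idx (Suc k)) \<and> dd \<nu> xk q \<le> e / 2^k)"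
      have x0: "x 0 = y" unfolding x_def by simp
      have xS: "x (Suc k) = (SOME q. q \<in> As (idx (Suc k)) \<and> dd \<nu> (x k) q \<le> e / 2^k)" for k
        unfolding x_def by simp
      have xin: "x k \<in> As (idx k)" for k
      proof (induction k)
        case 0 then show ?case using x0 idx0 y by simp
      next
        case (Suc k)
        from step[OF Suc] have "\<exists>q. q \<in> As (idx (Suc k)) \<and> dd \<nu> (x k) q \<le> e / 2^k" by blast
        from someI_ex[OF this] show ?case unfolding xS by blast
      qed
      have xstep: "dd \<nu> (x k) (x (Suc k)) \<le> e / 2^k" for k
      proof -
        from step[OF xin[of k]] have "\<exists>q. q \<in> As (idx (Suc k)) \<and> dd \<nu> (x k) q \<le> e / 2^k" by blast
        from someI_ex[OF this] show ?thesis unfolding xS by blast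
      qed
      have xd: "dd \<nu> (x k) (x (k + j)) \<le> 2 * e / 2^k - 2 * e / 2^(k + j)" for k j
      proof (induction j)
        case 0 then show ?case by (simp add: dd_zero)
      next
        case (Suc j)
        have "dd \<nu> (x k) (x (k + Suc j)) \<le> dd \<nu> (x k) (x (k + j)) + dd \<nu> (x (k + j)) (x (Suc (k + j)))"
          using dd_tri by simp
        moreover have "2 * e / 2^(k + Suc j) = e / 2^(k + j)" by simp
        ultimately show ?case using Suc xstep[of "k + j"] by simp
      qed
      have pos: "0 < 2 * e / 2^k" for k :: nat using e0 by simp
      have xd2: "dd \<nu> (x k) (x l) \<le> 2 * e / 2^k" if "k \<le> l" for k l
        using xd[of k "l - k"] that pos[of l] by simp
      have mono2: "2 * e / 2^m \<le> 2 * e / 2^K" if "K \<le> m" for K m :: nat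
        using e0 that by (intro divide_left_mono) (auto intro: power_increasing)
      have arch: "\<exists>K. 2 * e / 2^K < t" if "t > 0" for t
      proof -
        obtain K where "2 * e / t < 2^K" using real_arch_pow[of 2] by auto
        then have "2 * e < 2^K * t" using that by (simp add: field_simps)
        then show ?thesis using that by (intro exI[of _ K]) (simp add: field_simps)
      qed
      have "s_cauchy \<nu> x"
        unfolding s_cauchy_def
      proof (intro allI impI)
        fix t :: real assume t: "t > 0"
        obtain K where K: "2 * e / 2^K < t" using arch t by blast
        have "near \<nu> (x m) (x m') t" if "m \<ge> K" "m' \<ge> K" for m m'
        proof (cases "m \<le> m'")
          case True
          then have "dd \<nu> (x m) (x m') < t" using xd2[OF True] mono2[OF that(1)] K by linarith
          then show ?thesis by (rule dd_less)
        next
          case False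
          then have "m' \<le> m" by simp
          then have "dd \<nu> (x m') (x m) < t" using xd2[of m' m] mono2[OF that(2)] K by linarith
          then have "dd \<nu> (x m) (x m') < t" using dd_commute[of "x m" "x m'"] by simp
          then show ?thesis by (rule dd_less)
        qed
        then show "\<exists>N. \<forall>m\<ge>N. \<forall>n\<ge>N. 1 - t < \<nu> (x m - x n) t" unfolding near_def by blast
      qed
      then obtain l where l: "s_converges \<nu> x l" using comp unfolding s_complete_def by blast
      have ld: "dd \<nu> (x k) l \<le> 2 * e / 2^k" for k
      proof (rule field_le_epsilon)
        fix t :: real assume t: "t > 0"
        obtain N' where N': "\<forall>n\<ge>N'. near \<nu> (x n) l t" using l t unfolding s_converges_def near_def by blast
        have "dd \<nu> (x k) l \<le> dd \<nu> (x k) (x (max k N')) + dd \<nu> (x (max k N')) l" by (rule dd_tri)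
        moreover have "dd \<nu> (x (max k N')) l \<le> t" using N' dd_le by simp
        moreover have "dd \<nu> (x k) (x (max k N')) \<le> 2 * e / 2^k" by (rule xd2) simp
        ultimately show "dd \<nu> (x k) l \<le> 2 * e / 2^k + t" by linarith
      qed
      have "l \<in> A" unfolding A_def
      proof (intro CollectI allI impI)
        fix \<epsilon> :: real and N' :: nat assume \<epsilon>: "\<epsilon> > 0"
        obtain K where K: "2 * e / 2^K < \<epsilon>" using arch \<epsilon> by blast
        have "idx (K + N') \<ge> N'" using Ng2[of "K + N'"] unfolding idx_def by simp
        moreover have "x (K + N') \<in> As (idx (K + N'))" by (rule xin)
        moreover have "dd \<nu> l (x (K + N')) < \<epsilon>"
          using ld[of "K + N'"] mono2[of K "K + N'"] K dd_commute[of l "x (K + N')"] by simp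
        ultimately show "\<exists>n\<ge>N'. \<exists>y\<in>As n. dd \<nu> l y < \<epsilon>" by blast
      qed
      moreover have "dd \<nu> y l \<le> 2 * e" using ld[of 0] x0 by simp
      ultimately show "\<exists>l\<in>A. dd \<nu> y l \<le> 2 * e" by blast
    qed
    then show ?thesis by blast
  qed
  have neA: "A \<noteq> {}"
  proof -
    obtain N where N: "\<forall>n\<ge>N. \<forall>y\<in>As n. \<exists>l\<in>A. dd \<nu> y l \<le> 2 * 1" using outc[of 1] by auto
    obtain y where "y \<in> As N" using ne by blast
    then show ?thesis using N by blast
  qed
  have "H_converges \<nu> As A" unfolding H_converges_def
  proof (intro allI impI)
    fix t :: real assume t: "t > 0"
    obtain N1 where N1: "\<forall>n\<ge>N1. \<forall>x\<in>A. \<exists>z\<in>As n. dd \<nu> z x \<le> 2 * (t/8)" using inc[of "t/8"] t by (simp only: zero_less_divide_iff zero_less_numeral simp_thms) blast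
    obtain N2 where N2: "\<forall>n\<ge>N2. \<forall>y\<in>As n. \<exists>l\<in>A. dd \<nu> y l \<le> 2 * (t/8)" using outc[of "t/8"] t by (simp only: zero_less_divide_iff zero_less_numeral simp_thms) blast
    have "H_metric \<nu> (As n) A t > 1 - t" if "n \<ge> max N1 N2" for n
    proof (rule hd_H_gt[OF ne[rule_format] neA _ ])
      show "hdist \<nu> (As n) A (2 * (t/8))" unfolding hdist_def using N1 N2 that by auto
      show "2 * (t/8) < t" using t by simp
    qed
    then show "\<exists>N. \<forall>n\<ge>N. H_metric \<nu> (As n) A t > 1 - t" by blast
  qed
  then show ?thesis using neA clA by blast
qed


lemma compact_limit:
  assumes As: "\<forall>n. As n \<in> P_kc \<nu>" and neA: "A \<noteq> {}" and clA: "s_closed \<nu> A"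
    and conv: "H_converges \<nu> As A" and comp: "s_complete \<nu>"
  shows "s_compact \<nu> A"
proof -
  have neAs: "As n \<noteq> {}" and cpAs: "compactin M.mtopology (As n)" for n
    using As by (auto simp: P_kc_def s_compact_iff)
  have mc: "M.mcomplete" using comp by (rule mcomplete_of_s)
  have clA': "closedin M.mtopology A" using clA s_closed_iff by simp
  have "M.mtotally_bounded A" unfolding M.mtotally_bounded_def
  proof (intro allI impI)
    fix \<epsilon> :: real assume \<epsilon>: "\<epsilon> > 0"
    then have "\<epsilon>/4 > 0" by simp
    then obtain N where N: "\<forall>n\<ge>N. H_metric \<nu> (As n) A (\<epsilon>/4) > 1 - \<epsilon>/4"
      using conv unfolding H_converges_def by presburger
    have hN: "hdist \<nu> (As N) A (\<epsilon>/4)" using N by (intro H_gt_hd[OF neAs neA]) simp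
    have "M.mtotally_bounded (As N)" using cpAs by (rule M.compactin_imp_mtotally_bounded)
    from this[unfolded M.mtotally_bounded_def, rule_format, OF \<open>\<epsilon>/4 > 0\<close>]
    obtain K where K: "finite K" "K \<subseteq> As N" "As N \<subseteq> (\<Union>x\<in>K. M.mball x (\<epsilon>/4))"
      by auto
    have "\<forall>k\<in>K. \<exists>a. a \<in> A \<and> dd \<nu> k a \<le> \<epsilon>/4"
    proof
      fix k assume "k \<in> K"
      then have "k \<in> As N" using K(2) by blast
      then show "\<exists>a. a \<in> A \<and> dd \<nu> k a \<le> \<epsilon>/4" using hN unfolding hdist_def by blast
    qed
    from bchoice[OF this] obtain f where f: "\<forall>k\<in>K. f k \<in> A \<and> dd \<nu> k (f k) \<le> \<epsilon>/4" by blast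
    have "A \<subseteq> (\<Union>x\<in>f ` K. M.mball x \<epsilon>)"
    proof
      fix x assume x: "x \<in> A"
      obtain z where z: "z \<in> As N" "dd \<nu> z x \<le> \<epsilon>/4" using hN x unfolding hdist_def by blast
      have "z \<in> (\<Union>x\<in>K. M.mball x (\<epsilon>/4))" using K(3) z(1) by blast
      then obtain k where k: "k \<in> K" "dd \<nu> k z < \<epsilon>/4" by auto
      have "dd \<nu> (f k) x \<le> dd \<nu> (f k) k + dd \<nu> k x" by (rule dd_tri)
      moreover have "dd \<nu> k x \<le> dd \<nu> k z + dd \<nu> z x" by (rule dd_tri)
      moreover have "dd \<nu> (f k) k \<le> \<epsilon>/4" using f k(1) dd_commute[of "f k" k] by simp
      ultimately have "dd \<nu> (f k) x < \<epsilon>" using k z \<epsilon> by linarith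
      then show "x \<in> (\<Union>x\<in>f ` K. M.mball x \<epsilon>)" using k(1) by auto
    qed
    moreover have "f ` K \<subseteq> A" using f by auto
    moreover have "finite (f ` K)" using K(1) by simp
    ultimately show "\<exists>K. finite K \<and> K \<subseteq> A \<and> A \<subseteq> (\<Union>x\<in>K. M.mball x \<epsilon>)"
      by (intro exI[of _ "f ` K"]) simp
  qed
  then have "compactin M.mtopology (M.mtopology closure_of A)"
    using M.mtotally_bounded_eq_compact_closure_of[OF mc] by blast
  moreover have "M.mtopology closure_of A = A" using clA' by (simp add: closure_of_eq)
  ultimately have "compactin M.mtopology A" by simp
  then show ?thesis using s_compact_iff by simp
qed

end

theorem theorem4p9:
  fixes \<nu> :: "'a::real_vector \<Rightarrow> distf" and \<tau> :: "distf \<Rightarrow> distf \<Rightarrow> distf"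
  assumes "serstnev_RN_space \<nu> \<tau>"
    and "sup_continuous_tf \<tau>"
    and "\<And>F G x t. D_plus F \<Longrightarrow> D_plus G \<Longrightarrow> x \<ge> 0 \<Longrightarrow> t \<in> {0..1} \<Longrightarrow>
           min (F (t * x)) (G ((1 - t) * x)) \<le> \<tau> F G x"
  shows "H_closed_in_P_f \<nu> (P_fc \<nu>)
         \<and> (s_complete \<nu> \<longrightarrow> H_complete \<nu> (P_fc \<nu>))
         \<and> (s_complete \<nu> \<longrightarrow> H_complete \<nu> (P_kc \<nu>))"
proof -
  interpret srn \<nu> \<tau> using assms(1,3) by unfold_locales auto
  have c1: "H_closed_in_P_f \<nu> (P_fc \<nu>)"
    unfolding H_closed_in_P_f_def
  proof (intro allI impI)
    fix As A assume As: "\<forall>n. As n \<in> P_fc \<nu>" and A: "A \<in> P_f \<nu>" and cv: "H_converges \<nu> As A"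
    have "convex A" using conv_limit[OF As A cv] .
    then show "A \<in> P_fc \<nu>" using A by (simp add: P_f_def P_fc_def)
  qed
  have c2: "H_complete \<nu> (P_fc \<nu>)" if comp: "s_complete \<nu>"
    unfolding H_complete_def
  proof (intro allI impI)
    fix As assume As: "\<forall>n. As n \<in> P_fc \<nu>" and ca: "H_cauchy \<nu> As"
    have ne: "\<forall>n. As n \<noteq> {}" using As by (simp add: P_fc_def)
    obtain A where A: "A \<noteq> {}" "s_closed \<nu> A" "H_converges \<nu> As A"
      using limit_exists[OF ne ca comp] by blast
    have "A \<in> P_f \<nu>" using A by (simp add: P_f_def)
    then have "convex A" using conv_limit[OF As _ A(3)] by blast
    then have "A \<in> P_fc \<nu>" using A by (simp add: P_fc_def)
    then show "\<exists>A\<in>P_fc \<nu>. H_converges \<nu> As A" using A(3) by blast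
  qed
  have c3: "H_complete \<nu> (P_kc \<nu>)" if comp: "s_complete \<nu>"
    unfolding H_complete_def
  proof (intro allI impI)
    fix As assume As: "\<forall>n. As n \<in> P_kc \<nu>" and ca: "H_cauchy \<nu> As"
    have ne: "\<forall>n. As n \<noteq> {}" using As by (simp add: P_kc_def)
    have As': "\<forall>n. As n \<in> P_fc \<nu>"
    proof
      fix n
      have "compactin M.mtopology (As n)" using As by (simp add: P_kc_def s_compact_iff)
      then have "closedin M.mtopology (As n)"
        by (rule compactin_imp_closedin[OF M.Hausdorff_space_mtopology])
      then show "As n \<in> P_fc \<nu>" using As by (simp add: P_kc_def P_fc_def s_closed_iff)
    qed
    obtain A where A: "A \<noteq> {}" "s_closed \<nu> A" "H_converges \<nu> As A"
      using limit_exists[OF ne ca comp] by blast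
    have "A \<in> P_f \<nu>" using A by (simp add: P_f_def)
    then have "convex A" using conv_limit[OF As' _ A(3)] by blast
    moreover have "s_compact \<nu> A" using compact_limit[OF As A comp] .
    ultimately have "A \<in> P_kc \<nu>" using A by (simp add: P_kc_def)
    then show "\<exists>A\<in>P_kc \<nu>. H_converges \<nu> As A" using A(3) by blast
  qed
  show ?thesis using c1 c2 c3 by blast
qed

end
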